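(* Let $c>0$ and let $h$ additionally satisfy $h(y)>-1$ for $y\in(-\pi,\pi)$. For $\vartheta\in(-1,1)$ and $y\in(-\pi,\pi]$ let $u(x,t;\vartheta,y)$ be the entire solution of $\partial_t u=\partial_{xx}u-c\partial_x u$ ($x>0$), $\partial_x u=1+\vartheta h(u)$ ($x=0$), which is relative periodic ($u(\cdot,t+T)=u(\cdot,t)-2\pi$ for a minimal $T=T(\vartheta)>0$), satisfies $\partial_x u>0$, $\partial_t u<0$, and is normalized by $u(0,0;\vartheta,y)=y$. Then for every fixed $y\in(-\pi,\pi]$ and all $M>0$, $\tau>0$, the family $\{u(\cdot,\cdot;\vartheta,y):\vartheta\in(-1,1)\}$ is uniformly bounded in $L^\infty([0,M]\times[-\tau,\tau])$.
   Context: $h\in C^2(\mathbb{R},\mathbb{R})$ is $2\pi$-periodic with $\max h=1$, $\min h=h(\pi)=-1$. Entire solutions are classical solutions for all $t\in\mathbb{R}$ with $e^{-cx/2}u(\cdot,t)$ bounded and uniformly continuous on $[0,\infty)$. For each $\vartheta\in(-1,1)$ such relative periodic monotone solutions exist and are unique up to time translation among entire solutions with $\partial_t u<0$, so the normalization is well defined. *)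

theory Defs
  imports "HOL-Analysis.Analysis"
begin

definition C2_real :: "(real \<Rightarrow> real) \<Rightarrow> bool" where
  "C2_real h \<longleftrightarrow> (\<exists>h1 h2. (\<forall>y. (h has_real_derivative h1 y) (at y)) \<and>
      (\<forall>y. (h1 has_real_derivative h2 y) (at y)) \<and> continuous_on UNIV h2)"

definition admissible_h :: "(real \<Rightarrow> real) \<Rightarrow> bool" where
  "admissible_h h \<longleftrightarrow> C2_real h \<and> (\<forall>y. h (y + 2 * pi) = h y) \<and>
     (\<forall>y. h y \<le> 1) \<and> (\<exists>y. h y = 1) \<and> (\<forall>y. -1 \<le> h y) \<and> h pi = -1"

definition rel_periodic_monotone_solution ::
    "real \<Rightarrow> (real \<Rightarrow> real) \<Rightarrow> real \<Rightarrow> (real \<Rightarrow> real \<Rightarrow> real) \<Rightarrow> bool" where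
  "rel_periodic_monotone_solution c h \<theta> u \<longleftrightarrow>
    (\<exists>ux uxx ut.
      continuous_on ({0..} \<times> UNIV) (\<lambda>(x, t). u x t) \<and>
      continuous_on ({0..} \<times> UNIV) (\<lambda>(x, t). ux x t) \<and>
      continuous_on ({0<..} \<times> UNIV) (\<lambda>(x, t). uxx x t) \<and>
      continuous_on ({0<..} \<times> UNIV) (\<lambda>(x, t). ut x t) \<and>
      (\<forall>x\<ge>0. \<forall>t. ((\<lambda>s. u s t) has_real_derivative ux x t) (at x within {0..})) \<and>
      (\<forall>x>0. \<forall>t. ((\<lambda>s. ux s t) has_real_derivative uxx x t) (at x)) \<and>
      (\<forall>x>0. \<forall>t. ((\<lambda>s. u x s) has_real_derivative ut x t) (at t)) \<and>
      (\<forall>x>0. \<forall>t. ut x t = uxx x t - c * ux x t) \<and>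
      (\<forall>t. ux 0 t = 1 + \<theta> * h (u 0 t)) \<and>
      (\<forall>t. bounded ((\<lambda>x. exp (- c * x / 2) * u x t) ` {0..}) \<and>
           uniformly_continuous_on {0..} (\<lambda>x. exp (- c * x / 2) * u x t)) \<and>
      (\<forall>x\<ge>0. \<forall>t. ux x t > 0) \<and>
      (\<forall>x>0. \<forall>t. ut x t < 0) \<and>
      (\<exists>T>0. (\<forall>x\<ge>0. \<forall>t. u x (t + T) = u x t - 2 * pi) \<and>
         (\<forall>T'. 0 < T' \<and> T' < T \<longrightarrow> \<not> (\<forall>x\<ge>0. \<forall>t. u x (t + T') = u x t - 2 * pi))))"

end

theory Submission
  imports Defs
begin


lemma cont_slice:
  assumes "continuous_on (S \<times> UNIV) (\<lambda>(x, t). F x t)" "x \<in> S"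
  shows "continuous_on A (F x)"
proof -
  have "continuous_on A ((\<lambda>(x, t). F x t) \<circ> (\<lambda>t. (x, t)))"
    by (rule continuous_on_compose) (auto intro!: continuous_intros continuous_on_subset[OF assms(1)] simp: assms(2))
  then show ?thesis by (simp add: o_def)
qed

lemma cont_slice1:
  assumes "continuous_on (S \<times> UNIV) (\<lambda>(x, t). F x t)"
  shows "continuous_on S (\<lambda>x. F x t)"
proof -
  have "continuous_on S ((\<lambda>(x, t). F x t) \<circ> (\<lambda>x. (x, t)))"
    by (rule continuous_on_compose) (auto intro!: continuous_intros continuous_on_subset[OF assms(1)])
  then show ?thesis by (simp add: o_def)
qed

lemma lim0:
  fixes f :: "real \<Rightarrow> real"
  assumes "continuous_on {0..} f" "\<forall>x>0. f x \<ge> 0"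
  shows "f 0 \<ge> 0"
proof (rule ccontr)
  assume "\<not> f 0 \<ge> 0"
  hence neg: "f 0 < 0" by simp
  from assms(1) have "\<exists>d>0. \<forall>x'\<in>{0..}. dist x' 0 < d \<longrightarrow> dist (f x') (f 0) < - f 0"
    unfolding continuous_on_iff using neg by (metis atLeast_iff neg_0_less_iff_less order_refl)
  then obtain d where d: "d > 0" "\<forall>x'\<in>{0..}. dist x' 0 < d \<longrightarrow> dist (f x') (f 0) < - f 0" by blast
  hence "dist (f (d/2)) (f 0) < - f 0" by (auto simp: dist_real_def)
  moreover have "f (d/2) \<ge> 0" using assms(2) d by auto
  ultimately show False by (auto simp: dist_real_def)
qed



lemma main_bound:
  fixes c \<theta> y M \<tau> :: real and h :: "real \<Rightarrow> real" and u :: "real \<Rightarrow> real \<Rightarrow> real"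
  assumes c: "c > 0" and adm: "admissible_h h" and th: "-1 < \<theta>" "\<theta> < 1"
    and sol: "rel_periodic_monotone_solution c h \<theta> u" and u00: "u 0 0 = y"
    and M: "M > 0" and tau: "\<tau> > 0"
  shows "\<forall>x t. 0 \<le> x \<and> x \<le> M \<and> -\<tau> \<le> t \<and> t \<le> \<tau> \<longrightarrow>
     \<bar>u x t\<bar> \<le> \<bar>y\<bar> + 2*pi + 2*M + 2*M*exp(c*M) + 2*pi*(\<tau>*c/pi + 1)"
proof -
  obtain ux uxx ut where
    cu: "continuous_on ({0..} \<times> UNIV) (\<lambda>(x, t). u x t)" and
    cux: "continuous_on ({0..} \<times> UNIV) (\<lambda>(x, t). ux x t)" and
    cuxx: "continuous_on ({0<..} \<times> UNIV) (\<lambda>(x, t). uxx x t)" and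
    cut: "continuous_on ({0<..} \<times> UNIV) (\<lambda>(x, t). ut x t)" and
    dux: "\<forall>x\<ge>0. \<forall>t. ((\<lambda>s. u s t) has_real_derivative ux x t) (at x within {0..})" and
    duxx: "\<forall>x>0. \<forall>t. ((\<lambda>s. ux s t) has_real_derivative uxx x t) (at x)" and
    dut: "\<forall>x>0. \<forall>t. ((\<lambda>s. u x s) has_real_derivative ut x t) (at t)" and
    pde: "\<forall>x>0. \<forall>t. ut x t = uxx x t - c * ux x t" and
    bc: "\<forall>t. ux 0 t = 1 + \<theta> * h (u 0 t)" and
    uxpos: "\<forall>x\<ge>0. \<forall>t. ux x t > 0" and
    utneg: "\<forall>x>0. \<forall>t. ut x t < 0" and
    Tex: "\<exists>T>0. (\<forall>x\<ge>0. \<forall>t. u x (t + T) = u x t - 2 * pi) \<and>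
         (\<forall>T'. 0 < T' \<and> T' < T \<longrightarrow> \<not> (\<forall>x\<ge>0. \<forall>t. u x (t + T') = u x t - 2 * pi))"
    using sol unfolding rel_periodic_monotone_solution_def by (elim exE conjE) blast
  obtain T where T: "T > 0" and per: "\<forall>x\<ge>0. \<forall>t. u x (t + T) = u x t - 2 * pi"
    using Tex by blast
  have cut_x: "continuous_on A (ut x)" if "x > 0" for x A
    using cont_slice[OF cut] that by auto
  have cuxx_x: "continuous_on A (uxx x)" if "x > 0" for x A
    using cont_slice[OF cuxx] that by auto
  have cux_x: "continuous_on A (ux x)" if "x \<ge> 0" for x A
    using cont_slice[OF cux] that by auto
  have cu_x: "continuous_on A (u x)" if "x \<ge> 0" for x A
    using cont_slice[OF cu] that by auto
  have monot: "u x t \<le> u x s" if "x \<ge> 0" "s \<le> t" for x s t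
  proof (cases "x > 0")
    case True
    have "- u x s \<le> - u x t"
      by (rule DERIV_nonneg_imp_nondecreasing[OF \<open>s \<le> t\<close>, of "\<lambda>r. - u x r"])
        (use True dut utneg in \<open>auto intro!: derivative_eq_intros exI[of _ "- ut x _"] less_imp_le\<close>)
    then show ?thesis by simp
  next
    case False
    hence x0: "x = 0" using that by simp
    have "0 \<le> (\<lambda>x. u x s - u x t) 0"
    proof (rule lim0)
      show "continuous_on {0..} (\<lambda>x. u x s - u x t)"
        by (intro continuous_intros cont_slice1[OF cu])
      show "\<forall>x>0. 0 \<le> u x s - u x t"
      proof (intro allI impI)
        fix x :: real assume "x > 0"
        have "- u x s \<le> - u x t"
          by (rule DERIV_nonneg_imp_nondecreasing[OF \<open>s \<le> t\<close>, of "\<lambda>r. - u x r"])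
            (use \<open>x > 0\<close> dut utneg in \<open>auto intro!: derivative_eq_intros exI[of _ "- ut x _"] less_imp_le\<close>)
        then show "0 \<le> u x s - u x t" by simp
      qed
    qed
    then show ?thesis using x0 by simp
  qed
  have dx_at: "((\<lambda>s. u s t) has_real_derivative ux x t) (at x)" if "x > 0" for x t
  proof -
    have "((\<lambda>s. u s t) has_real_derivative ux x t) (at x within {0<..})"
      by (rule DERIV_subset[of _ _ _ "{0..}"]) (use dux that in auto)
    then show ?thesis using at_within_open[of x "{0<..}"] that by simp
  qed
  have monox: "u a t \<le> u b t" if "0 \<le> a" "a \<le> b" for a b t
  proof (rule DERIV_nonneg_imp_increasing_open[OF \<open>a \<le> b\<close>])
    show "continuous_on {a..b} (\<lambda>s. u s t)"
      by (rule continuous_on_subset[OF cont_slice1[OF cu]]) (use that in auto)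
    fix x assume "a < x" "x < b"
    then show "\<exists>y. ((\<lambda>s. u s t) has_real_derivative y) (at x) \<and> 0 \<le> y"
      using dx_at[of x t] uxpos that by (auto intro!: less_imp_le)
  qed
  have perN: "u x (t + real n * T) = u x t - 2 * pi * real n" if "x \<ge> 0" for x t n
  proof (induction n)
    case 0 then show ?case by simp
  next
    case (Suc n)
    have "u x (t + real (Suc n) * T) = u x ((t + real n * T) + T)" by (simp add: algebra_simps)
    also have "\<dots> = u x (t + real n * T) - 2 * pi" using per that by blast
    finally show ?case using Suc by (simp add: algebra_simps)
  qed

  define B where "B x = integral {0..T} (ux x)" for x
  define A where "A x = integral {0..T} (u x)" for x
  have cB: "continuous_on {0..} B"
  proof -
    have "continuous_on {0..} (\<lambda>x. integral (cbox 0 T) (ux x))"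
      by (rule integral_continuous_on_param, rule continuous_on_subset[OF cux]) auto
    then show ?thesis unfolding B_def by simp
  qed
  have cA: "continuous_on {0..} A"
  proof -
    have "continuous_on {0..} (\<lambda>x. integral (cbox 0 T) (u x))"
      by (rule integral_continuous_on_param, rule continuous_on_subset[OF cu]) auto
    then show ?thesis unfolding A_def by simp
  qed
  have dB: "(B has_real_derivative integral {0..T} (uxx x)) (at x)" if "x > 0" for x
  proof -
    have "((\<lambda>x. integral (cbox 0 T) (ux x)) has_field_derivative integral (cbox 0 T) (uxx x)) (at x within {0<..})"
    proof (rule leibniz_rule_field_derivative[where fx="\<lambda>x t. uxx x t"])
      show "((\<lambda>x. ux x t) has_field_derivative uxx x' t) (at x' within {0<..})" if "x' \<in> {0<..}" for x' t
        using duxx that by (auto intro: has_field_derivative_at_within)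
      show "ux x' integrable_on cbox 0 T" if "x' \<in> {0<..}" for x'
        using that by (auto intro!: integrable_continuous_real cux_x)
      show "continuous_on ({0<..} \<times> cbox 0 T) (\<lambda>(x, t). uxx x t)"
        by (rule continuous_on_subset[OF cuxx]) auto
    qed (use that in auto)
    then show ?thesis unfolding B_def using at_within_open[of x "{0<..}"] that by simp
  qed
  have dA: "(A has_real_derivative B x) (at x)" if "x > 0" for x
  proof -
    have "((\<lambda>x. integral (cbox 0 T) (u x)) has_field_derivative integral (cbox 0 T) (ux x)) (at x within {0<..})"
    proof (rule leibniz_rule_field_derivative[where fx="\<lambda>x t. ux x t"])
      show "((\<lambda>x. u x t) has_field_derivative ux x' t) (at x' within {0<..})" if "x' \<in> {0<..}" for x' t
        using dx_at that by (auto intro: has_field_derivative_at_within)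
      show "u x' integrable_on cbox 0 T" if "x' \<in> {0<..}" for x'
        using that by (auto intro!: integrable_continuous_real cu_x)
      show "continuous_on ({0<..} \<times> cbox 0 T) (\<lambda>(x, t). ux x t)"
        by (rule continuous_on_subset[OF cux]) auto
    qed (use that in auto)
    then show ?thesis unfolding A_def B_def using at_within_open[of x "{0<..}"] that by simp
  qed
  have ftc: "integral {0..T} (ut x) = - 2 * pi" if "x > 0" for x
  proof -
    have "(ut x has_integral (u x T - u x 0)) {0..T}"
      by (rule fundamental_theorem_of_calculus)
        (use T dut that in \<open>auto simp: has_real_derivative_iff_has_vector_derivative[symmetric]
            intro: has_field_derivative_at_within\<close>)
    moreover have "u x T = u x 0 - 2 * pi" using per that by (metis add_0 less_imp_le)
    ultimately show ?thesis by (simp add: integral_unique)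
  qed
  have intxx: "integral {0..T} (uxx x) = c * B x - 2 * pi" if "x > 0" for x
  proof -
    have i1: "uxx x integrable_on {0..T}" by (rule integrable_continuous_real, rule cuxx_x) (use that in auto)
    have i2: "ux x integrable_on {0..T}" by (rule integrable_continuous_real, rule cux_x) (use that in auto)
    have "- 2 * pi = integral {0..T} (\<lambda>t. uxx x t - c * ux x t)"
    proof -
      have "ut x = (\<lambda>t. uxx x t - c * ux x t)" using pde that by auto
      then show ?thesis using ftc[OF that] by simp
    qed
    also have "\<dots> = integral {0..T} (uxx x) - c * B x"
    proof -
      have i3: "(\<lambda>t. c * ux x t) integrable_on {0..T}" using integrable_on_cmult_left[OF i2, of c] by simp
      have "integral {0..T} (\<lambda>t. uxx x t - c * ux x t) = integral {0..T} (uxx x) - integral {0..T} (\<lambda>t. c * ux x t)"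
        using integral_diff[OF i1 i3] by simp
      then show ?thesis unfolding B_def by simp
    qed
    finally show ?thesis by simp
  qed
  define k where "k = B 0 - 2 * pi / c"
  have Bform: "B x = 2 * pi / c + k * exp (c * x)" if "x \<ge> 0" for x
  proof (cases "x = 0")
    case True then show ?thesis unfolding k_def by simp
  next
    case False
    hence xp: "x > 0" using that by simp
    define D where "D s = exp (- c * s) * (B s - 2 * pi / c)" for s
    have "D x = D 0"
    proof (rule DERIV_isconst2[of 0 "x + 1"])
      show "continuous_on {0..x + 1} D" unfolding D_def
        by (intro continuous_intros continuous_on_subset[OF cB]) auto
      fix s :: real assume s: "0 < s" "s < x + 1"
      have "(D has_real_derivative (- c * exp (- c * s)) * (B s - 2 * pi / c) + exp (- c * s) * integral {0..T} (uxx s)) (at s)"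
        unfolding D_def by (auto intro!: derivative_eq_intros dB s)
      moreover have "(- c * exp (- c * s)) * (B s - 2 * pi / c) + exp (- c * s) * integral {0..T} (uxx s) = 0"
        using c by (simp add: intxx[OF s(1)] field_simps)
      ultimately show "(D has_real_derivative 0) (at s)" by simp
    qed (use xp in auto)
    hence "exp (- c * x) * (B x - 2 * pi / c) = k" unfolding D_def k_def by simp
    hence "exp (c * x) * (exp (- c * x) * (B x - 2 * pi / c)) = exp (c * x) * k" by simp
    moreover have "exp (c * x) * exp (- c * x) = 1" by (simp add: exp_minus[symmetric] exp_add[symmetric])
    ultimately have "B x - 2 * pi / c = exp (c * x) * k" by (metis mult.assoc mult_1)
    then show ?thesis by (simp add: algebra_simps)
  qed
  have Bnn: "B x \<ge> 0" if "x \<ge> 0" for x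
    unfolding B_def using uxpos that
    by (intro integral_nonneg integrable_continuous_real cux_x) (auto intro: less_imp_le)
  have k0: "k \<ge> 0"
  proof (rule ccontr)
    assume "\<not> k \<ge> 0"
    hence kn: "k < 0" by simp
    define x where "x = ln (2 * pi / (c * (- k)) + 1) / c"
    have ck: "c * (- k) > 0" using kn c by (simp add: mult_pos_neg)
    have q: "2 * pi / (c * (- k)) > 0" by (rule divide_pos_pos) (use ck pi_gt_zero in auto)
    hence pos: "2 * pi / (c * (- k)) + 1 > 0" by linarith
    have "ln (2 * pi / (c * (- k)) + 1) \<ge> 0" using q by (intro ln_ge_zero) linarith
    hence x0: "x \<ge> 0" unfolding x_def using c by simp
    have "exp (c * x) = 2 * pi / (c * (- k)) + 1" unfolding x_def using c pos by simp
    hence "B x = k" using Bform[OF x0] kn c by (simp add: field_simps)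
    then show False using Bnn[OF x0] kn by simp
  qed
  have h1: "\<theta> * h z \<le> 1" for z
  proof -
    have "\<bar>h z\<bar> \<le> 1" using adm unfolding admissible_h_def by (simp add: abs_le_iff)
    hence "\<bar>\<theta>\<bar> * \<bar>h z\<bar> \<le> 1 * 1" using th by (intro mult_mono) auto
    then show ?thesis by (metis abs_ge_self abs_mult mult_1 order_trans)
  qed
  have B0le: "B 0 \<le> 2 * T"
  proof -
    have "B 0 \<le> integral {0..T} (\<lambda>_. 2::real)" unfolding B_def
      by (rule integral_le) (use bc h1 in \<open>auto intro!: integrable_continuous_real cux_x\<close>)
    then show ?thesis using T by simp
  qed
  have Tge: "pi / c \<le> T" using B0le k0 unfolding k_def by simp
  have A0: "A 0 \<le> T * y"
  proof -
    have "A 0 \<le> integral {0..T} (\<lambda>_. y)" unfolding A_def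
      by (rule integral_le) (use monot[of 0 0] u00 in \<open>auto intro!: integrable_continuous_real cu_x\<close>)
    then show ?thesis using T by simp
  qed
  have uMT: "u M T = u M 0 - 2 * pi" using per M by (metis add_0 less_imp_le)
  have AM: "T * (u M 0 - 2 * pi) \<le> A M"
  proof -
    have "integral {0..T} (\<lambda>_. u M T) \<le> A M" unfolding A_def
      by (rule integral_le) (use monot[of M] M in \<open>auto intro!: integrable_continuous_real cu_x\<close>)
    then show ?thesis using T uMT by simp
  qed
  have Adiff: "A M - A 0 \<le> M * (2 * pi / c + k * exp (c * M))"
  proof -
    define g where "g x = x * (2 * pi / c + k * exp (c * M)) - A x" for x
    have "g 0 \<le> g M"
    proof (rule DERIV_nonneg_imp_increasing_open[of 0 M g])
      show "0 \<le> M" using M by simp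
      show "continuous_on {0..M} g" unfolding g_def
        by (intro continuous_intros continuous_on_subset[OF cA]) auto
      fix x :: real assume x: "0 < x" "x < M"
      have "(g has_real_derivative (2 * pi / c + k * exp (c * M)) - B x) (at x)"
        unfolding g_def by (auto intro!: derivative_eq_intros dA x)
      moreover have "B x \<le> 2 * pi / c + k * exp (c * M)"
        using Bform[of x] x k0 c by (auto intro!: mult_left_mono)
      ultimately show "\<exists>y. (g has_real_derivative y) (at x) \<and> 0 \<le> y" by auto
    qed
    then show ?thesis unfolding g_def by simp
  qed
  have kle: "k \<le> 2 * T"
  proof -
    have "2 * pi / c > 0" using c by (simp add: pi_gt_zero)
    then show ?thesis using B0le unfolding k_def by linarith
  qed
  have uM0: "u M 0 \<le> y + 2 * pi + 2 * M + 2 * M * exp (c * M)"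
  proof -
    have e1: "M * (2 * pi / c) \<le> M * (2 * T)" using Tge M c by (simp add: field_simps)
    have e2: "M * (k * exp (c * M)) \<le> M * (2 * T * exp (c * M))" using kle M by simp
    have "T * (u M 0 - 2 * pi) \<le> T * y + M * (2 * pi / c) + M * (k * exp (c * M))"
      using AM A0 Adiff by (simp add: algebra_simps)
    also have "\<dots> \<le> T * (y + 2 * M + 2 * M * exp (c * M))" using e1 e2 by (simp add: algebra_simps)
    finally have "u M 0 - 2 * pi \<le> y + 2 * M + 2 * M * exp (c * M)" using T by simp
    then show ?thesis by simp
  qed
  define n where "n = nat \<lceil>\<tau> / T\<rceil>"
  have nT: "\<tau> \<le> real n * T" unfolding n_def using T
    by (metis divide_le_eq le_nat_iff real_nat_ceiling_ge) 
  have nle: "real n \<le> \<tau> * c / pi + 1"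
  proof -
    have q: "\<tau> / T > 0" using tau T by simp
    hence "real n = of_int \<lceil>\<tau> / T\<rceil>" unfolding n_def by simp
    hence "real n \<le> \<tau> / T + 1" using of_int_ceiling_le_add_one[of "\<tau> / T"] by linarith
    moreover have "\<tau> / T \<le> \<tau> * c / pi" using Tge tau c T by (simp add: field_simps)
    ultimately show ?thesis by simp
  qed
  show ?thesis
  proof (intro allI impI)
    fix x t assume xt: "0 \<le> x \<and> x \<le> M \<and> - \<tau> \<le> t \<and> t \<le> \<tau>"
    have up: "u x t \<le> u M 0 + 2 * pi * real n"
    proof -
      have "u x t \<le> u M t" using monox xt by blast
      also have "\<dots> \<le> u M (- (real n * T))" using monot[of M] M xt nT by simp
      also have "\<dots> = u M 0 + 2 * pi * real n" using perN[of M "- (real n * T)" n] M by simp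
      finally show ?thesis .
    qed
    have lo: "y - 2 * pi * real n \<le> u x t"
    proof -
      have "y - 2 * pi * real n = u 0 (real n * T)" using perN[of 0 0 n] u00 by simp
      also have "\<dots> \<le> u 0 t" using monot[of 0] xt nT by simp
      also have "\<dots> \<le> u x t" using monox xt by blast
      finally show ?thesis .
    qed
    have f1: "2 * pi * real n \<le> 2 * pi * (\<tau> * c / pi + 1)"
      using nle pi_gt_zero by (intro mult_left_mono) auto
    have f2: "0 \<le> 2 * M * exp (c * M)" using M by simp
    have f3: "y \<le> \<bar>y\<bar>" "- y \<le> \<bar>y\<bar>" by auto
    have "u x t \<le> \<bar>y\<bar> + 2*pi + 2*M + 2*M*exp(c*M) + 2*pi*(\<tau>*c/pi + 1)"
      using up uM0 f1 f3 by linarith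
    moreover have "- u x t \<le> \<bar>y\<bar> + 2*pi + 2*M + 2*M*exp(c*M) + 2*pi*(\<tau>*c/pi + 1)"
      using lo f1 f2 f3 M pi_gt_zero by linarith
    ultimately show "\<bar>u x t\<bar> \<le> \<bar>y\<bar> + 2*pi + 2*M + 2*M*exp(c*M) + 2*pi*(\<tau>*c/pi + 1)"
      by (simp add: abs_le_iff)
  qed
qed

theorem lemma17:
  fixes c :: real and h :: "real \<Rightarrow> real" and y :: real
    and U :: "real \<Rightarrow> real \<Rightarrow> real \<Rightarrow> real"
  assumes "c > 0"
    and "admissible_h h"
    and "\<forall>z. -pi < z \<and> z < pi \<longrightarrow> h z > -1"
    and "-pi < y" and "y \<le> pi"
    and "\<forall>\<theta>. -1 < \<theta> \<and> \<theta> < 1 \<longrightarrow>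
           rel_periodic_monotone_solution c h \<theta> (U \<theta>) \<and> U \<theta> 0 0 = y"
  shows "\<forall>M>0. \<forall>\<tau>>0. \<exists>B. \<forall>\<theta>. -1 < \<theta> \<and> \<theta> < 1 \<longrightarrow>
           (\<forall>x t. 0 \<le> x \<and> x \<le> M \<and> -\<tau> \<le> t \<and> t \<le> \<tau> \<longrightarrow> \<bar>U \<theta> x t\<bar> \<le> B)"
proof (intro allI impI)
  fix M \<tau> :: real assume M: "M > 0" and tau: "\<tau> > 0"
  show "\<exists>B. \<forall>\<theta>. -1 < \<theta> \<and> \<theta> < 1 \<longrightarrow>
           (\<forall>x t. 0 \<le> x \<and> x \<le> M \<and> -\<tau> \<le> t \<and> t \<le> \<tau> \<longrightarrow> \<bar>U \<theta> x t\<bar> \<le> B)"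
  proof (rule exI[of _ "\<bar>y\<bar> + 2*pi + 2*M + 2*M*exp(c*M) + 2*pi*(\<tau>*c/pi + 1)"], intro allI impI)
    fix \<theta> x t :: real assume th: "-1 < \<theta> \<and> \<theta> < 1"
      and xt: "0 \<le> x \<and> x \<le> M \<and> -\<tau> \<le> t \<and> t \<le> \<tau>"
    have "\<forall>x t. 0 \<le> x \<and> x \<le> M \<and> -\<tau> \<le> t \<and> t \<le> \<tau> \<longrightarrow>
       \<bar>U \<theta> x t\<bar> \<le> \<bar>y\<bar> + 2*pi + 2*M + 2*M*exp(c*M) + 2*pi*(\<tau>*c/pi + 1)"
      by (rule main_bound[OF assms(1,2)]) (use th assms(6) M tau in auto)
    then show "\<bar>U \<theta> x t\<bar> \<le> \<bar>y\<bar> + 2*pi + 2*M + 2*M*exp(c*M) + 2*pi*(\<tau>*c/pi + 1)"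
      using xt by blast
  qed
qed

end
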